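(* The set $\mathcal{K}(H)$ of compact operators is an $F_{\sigma\delta}$ subset of $\mathcal{B}(H)$ in the strong operator topology, i.e., a countable intersection of countable unions of strongly closed sets.
   Context: $H$ is a fixed infinite-dimensional separable complex Hilbert space, $\mathcal{B}(H)$ the bounded operators on $H$, with the strong operator topology (topology of pointwise norm convergence on $H$). $\mathcal{K}(H)$ is the set of compact operators. *)

theory Defs
  imports "HOL-Analysis.Analysis"
begin

text \<open>A complex Hilbert space is modelled as a real Hilbert space (real inner product,
complete) together with an orthogonal complex structure J (multiplication by i):
J is linear, J (J x) = -x, and J preserves the real inner product.
The complex scalar multiplication is (a + i b) x = a x + b J x.\<close>

definition complex_structure :: "('a::real_inner \<Rightarrow> 'a) \<Rightarrow> bool" where
  "complex_structure J \<longleftrightarrow> linear J \<and> (\<forall>x. J (J x) = - x) \<and> (\<forall>x y. inner (J x) (J y) = inner x y)"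

text \<open>Bounded complex-linear operators: bounded real-linear operators commuting with J.\<close>
definition bounded_ops :: "('a::real_normed_vector \<Rightarrow> 'a) \<Rightarrow> ('a \<Rightarrow>\<^sub>L 'a) set" where
  "bounded_ops J = {T. \<forall>x. blinfun_apply T (J x) = J (blinfun_apply T x)}"

definition compact_op :: "('a::real_normed_vector \<Rightarrow>\<^sub>L 'a) \<Rightarrow> bool" where
  "compact_op T \<longleftrightarrow> compact (closure (blinfun_apply T ` ball 0 1))"

definition SOT :: "('a::real_normed_vector \<Rightarrow>\<^sub>L 'a) topology" where
  "SOT = pullback_topology UNIV blinfun_apply (product_topology (\<lambda>_. euclidean) UNIV)"

definition separable_space :: "'a::metric_space itself \<Rightarrow> bool" where
  "separable_space _ \<longleftrightarrow> (\<exists>D::'a set. countable D \<and> closure D = UNIV)"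

definition infinite_dimensional :: "'a::real_vector itself \<Rightarrow> bool" where
  "infinite_dimensional _ \<longleftrightarrow> \<not> (\<exists>S::'a set. finite S \<and> span S = UNIV)"

end

theory Submission
  imports Defs
begin

definition G :: "real \<Rightarrow> 'a::real_normed_vector set \<Rightarrow> ('a \<Rightarrow>\<^sub>L 'a) set" where
  "G r S = {T. \<forall>x\<in>ball 0 1. \<exists>y\<in>S. dist (blinfun_apply T x) y \<le> r}"

lemma SOT_eval: "continuous_map SOT euclidean (\<lambda>T. blinfun_apply T x)"
proof -
  have "continuous_map (product_topology (\<lambda>_. euclidean) UNIV) euclidean (\<lambda>f::'a\<Rightarrow>'a. f x)"
    by (rule continuous_map_product_projection) simp
  then have "continuous_map SOT euclidean ((\<lambda>f. f x) \<circ> blinfun_apply)"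
    unfolding SOT_def by blast
  then show ?thesis by (simp add: o_def)
qed

lemma topspace_SOT: "topspace SOT = UNIV"
  unfolding SOT_def topspace_pullback_topology by simp

lemma G_closed:
  assumes "finite S"
  shows "closedin SOT (G r S)"
proof -
  have c: "closedin SOT {T. dist (blinfun_apply T x) y \<le> r}" for x y
  proof -
    have "closedin SOT {T \<in> topspace SOT. blinfun_apply T x \<in> cball y r}"
      by (rule closedin_continuous_map_preimage[OF SOT_eval]) (simp add: closed_cball)
    then show ?thesis by (simp add: topspace_SOT dist_commute)
  qed
  have "G r S = \<Inter>((\<lambda>x. \<Union>((\<lambda>y. {T. dist (blinfun_apply T x) y \<le> r}) ` S)) ` ball 0 1)"
    unfolding G_def by auto
  also have "closedin SOT \<dots>"
    apply (rule closedin_Inter)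
     apply simp
    apply clarify
    apply (rule closedin_Union)
    using assms c by auto
  finally show ?thesis .
qed

lemma compact_op_char:
  fixes T :: "'a::{real_normed_vector, complete_space} \<Rightarrow>\<^sub>L 'a"
  assumes D: "closure D = UNIV"
  shows "compact_op T \<longleftrightarrow> (\<forall>m::nat. \<exists>S. finite S \<and> S \<subseteq> D \<and> T \<in> G (1 / Suc m) S)"
proof
  assume "compact_op T"
  then have cpt: "compact (closure (blinfun_apply T ` ball 0 1))" by (simp add: compact_op_def)
  show "\<forall>m::nat. \<exists>S. finite S \<and> S \<subseteq> D \<and> T \<in> G (1 / Suc m) S"
  proof
    fix m :: nat
    define e where "e = 1 / (2 * real (Suc m))"
    have e: "e > 0" by (simp add: e_def)
    obtain k where k: "finite k" "closure (blinfun_apply T ` ball 0 1) \<subseteq> (\<Union>x\<in>k. ball x e)"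
      using cpt e unfolding compact_eq_totally_bounded by blast
    have "\<forall>c. \<exists>d\<in>D. dist c d < e"
    proof
      fix c :: 'a
      have "c \<in> closure D" using D by simp
      then obtain d where "d \<in> D" "dist d c < e" using e unfolding closure_approachable by blast
      then show "\<exists>d\<in>D. dist c d < e" by (auto simp: dist_commute)
    qed
    then obtain f where f: "\<And>c. f c \<in> D" "\<And>c. dist c (f c) < e" by metis
    have "T \<in> G (1 / Suc m) (f ` k)"
      unfolding G_def
    proof (clarify)
      fix x :: 'a assume "x \<in> ball 0 1"
      then have "blinfun_apply T x \<in> closure (blinfun_apply T ` ball 0 1)"
        using closure_subset by blast
      then obtain c where c: "c \<in> k" "dist c (blinfun_apply T x) < e" using k(2) by auto
      have "dist (blinfun_apply T x) (f c) \<le> dist (blinfun_apply T x) c + dist c (f c)"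
        by (rule dist_triangle)
      also have "\<dots> \<le> 2 * e" using c f(2)[of c] by (simp add: dist_commute)
      also have "\<dots> = 1 / Suc m" by (simp add: e_def field_simps)
      finally show "\<exists>y\<in>f ` k. dist (blinfun_apply T x) y \<le> 1 / Suc m" using c by blast
    qed
    then show "\<exists>S. finite S \<and> S \<subseteq> D \<and> T \<in> G (1 / Suc m) S"
      using k(1) f(1) by blast
  qed
next
  assume H: "\<forall>m::nat. \<exists>S. finite S \<and> S \<subseteq> D \<and> T \<in> G (1 / Suc m) S"
  let ?A = "closure (blinfun_apply T ` ball 0 1)"
  have "complete ?A" by (simp add: complete_eq_closed)
  moreover have "\<exists>k. finite k \<and> ?A \<subseteq> (\<Union>x\<in>k. ball x e)" if e: "e > 0" for e :: real
  proof -
    obtain m :: nat where m: "1 / Suc m < e"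
      using e by (metis nat_approx_posE)
    obtain S where S: "finite S" "T \<in> G (1 / Suc m) S" using H by blast
    have cl: "closed (\<Union>y\<in>S. cball y (1 / Suc m))"
      using S(1) by (intro closed_UN) auto
    have "blinfun_apply T ` ball 0 1 \<subseteq> (\<Union>y\<in>S. cball y (1 / Suc m))"
      using S(2) unfolding G_def by (auto simp: dist_commute)
    then have "?A \<subseteq> (\<Union>y\<in>S. cball y (1 / Suc m))"
      using cl closure_minimal by blast
    also have "\<dots> \<subseteq> (\<Union>y\<in>S. ball y e)"
      using m by auto
    finally show ?thesis using S(1) by blast
  qed
  ultimately show "compact_op T"
    unfolding compact_op_def compact_eq_totally_bounded by blast
qed

theorem mainTheorem6:
  fixes J :: "'a::{real_inner, complete_space} \<Rightarrow> 'a"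
  assumes "complex_structure J"
    and "separable_space TYPE('a)"
    and "infinite_dimensional TYPE('a)"
  shows "\<exists>F :: nat \<Rightarrow> nat \<Rightarrow> ('a \<Rightarrow>\<^sub>L 'a) set.
           (\<forall>m n. closedin (subtopology SOT (bounded_ops J)) (F m n)) \<and>
           {T \<in> bounded_ops J. compact_op T} = (\<Inter>m. \<Union>n. F m n)"
proof -
  obtain D :: "'a set" where D: "countable D" "closure D = UNIV"
    using assms(2) unfolding separable_space_def by blast
  define Fin where "Fin = {S. finite S \<and> S \<subseteq> D}"
  have cF: "countable Fin" unfolding Fin_def using D(1) by (rule countable_Collect_finite_subset)
  have neF: "Fin \<noteq> {}" unfolding Fin_def by blast
  have rF: "range (from_nat_into Fin) = Fin" using cF neF by simp
  define F where "F m n = bounded_ops J \<inter> G (1 / Suc m) (from_nat_into Fin n)" for m n :: nat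
  have "closedin (subtopology SOT (bounded_ops J)) (F m n)" for m n
  proof -
    have "from_nat_into Fin n \<in> Fin" using rF by blast
    then have "finite (from_nat_into Fin n)" by (simp add: Fin_def)
    then have "closedin SOT (G (1 / Suc m) (from_nat_into Fin n))" by (rule G_closed)
    then show ?thesis unfolding F_def closedin_subtopology by blast
  qed
  moreover have "{T \<in> bounded_ops J. compact_op T} = (\<Inter>m. \<Union>n. F m n)"
  proof -
    have "(\<Union>n. F m n) = bounded_ops J \<inter> (\<Union>S\<in>Fin. G (1 / Suc m) S)" for m
    proof -
      have "(\<Union>n. F m n) = bounded_ops J \<inter> (\<Union>S\<in>range (from_nat_into Fin). G (1 / Suc m) S)"
        unfolding F_def by auto
      then show ?thesis using rF by simp
    qed
    then show ?thesis
      using compact_op_char[OF D(2)] unfolding Fin_def by auto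
  qed
  ultimately show ?thesis by blast
qed

end
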